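(* In the binary setting with $R_p=\kappa(Q-d_h)$ and $0<\beta\le1$, the maximum of $U(s,\cdot)$ over $[0,Q-d_l]$ is attained at one of the endpoints: it is attained at $q_s=0$ if $$\lambda w(p)\big[(\kappa-\pi)(Q-d_l)\big]^\beta\ \ge\ w(1-p)\Big\{\big[(\pi-\kappa)Q+\kappa d_h-\pi d_l\big]^\beta-\big[\kappa(d_h-Q)\big]^\beta\Big\},$$ and at $q_s=Q-d_l$ otherwise.
   Context: Binary setting: $\kappa>0$, $0<d_l<Q<d_h$, $0<p<1$; the demand equals $d_h$ with probability $p$ and $d_l$ with probability $1-p$. $L(y)=0$ if $y\ge0$, $L(y)=\kappa y$ if $y<0$. Value function $v(x)=x^\beta$ for $x\ge0$, $v(x)=-\lambda(-x)^\beta$ for $x<0$, with $\lambda\ge1$. Weighting $w(q)=\exp(-(-\ln q)^\mu)$, $0<\mu\le1$. Price $\pi=\pi_b^{\max}\in(0,\kappa)$. Seller's utility $U(s,q_s)=w(1-p)\,v\big(\pi q_s+L(Q-q_s-d_l)-R_p\big)+w(p)\,v\big(\pi q_s+L(Q-q_s-d_h)-R_p\big)$ for $q_s\ge0$. *)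

theory Defs
  imports Complex_Main
begin

definition Lpen :: "real \<Rightarrow> real \<Rightarrow> real" where
  "Lpen \<kappa> y = (if y \<ge> 0 then 0 else \<kappa> * y)"

definition vval :: "real \<Rightarrow> real \<Rightarrow> real \<Rightarrow> real" where
  "vval \<beta> lam x = (if x \<ge> 0 then x powr \<beta> else - lam * ((- x) powr \<beta>))"

definition wgt :: "real \<Rightarrow> real \<Rightarrow> real" where
  "wgt \<mu> q = exp (- ((- ln q) powr \<mu>))"

definition Useller ::
  "real \<Rightarrow> real \<Rightarrow> real \<Rightarrow> real \<Rightarrow> real \<Rightarrow> real \<Rightarrow> real \<Rightarrow> real \<Rightarrow> real \<Rightarrow> real \<Rightarrow> real \<Rightarrow> real" where
  "Useller \<kappa> \<beta> lam \<mu> p \<pi> Q dl dh Rp qs =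
     wgt \<mu> (1 - p) * vval \<beta> lam (\<pi> * qs + Lpen \<kappa> (Q - qs - dl) - Rp)
   + wgt \<mu> p * vval \<beta> lam (\<pi> * qs + Lpen \<kappa> (Q - qs - dh) - Rp)"

end

theory Submission
  imports Defs
begin

lemma G_mono:
  fixes a b \<pi> \<beta> :: real
  assumes "0 < a" "a \<le> b" "0 < \<pi>" "0 < \<beta>" "\<beta> \<le> 1"
  shows "(\<pi> + b) powr \<beta> - b powr \<beta> \<le> (\<pi> + a) powr \<beta> - a powr \<beta>"
proof -
  have "(\<lambda>x. (\<pi> + x) powr \<beta> - x powr \<beta>) b \<le> (\<lambda>x. (\<pi> + x) powr \<beta> - x powr \<beta>) a"
  proof (rule DERIV_nonpos_imp_nonincreasing[OF assms(2)])
    fix x assume x: "a \<le> x" "x \<le> b"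
    have xp: "0 < x" using x assms by linarith
    have d1: "((\<lambda>x. (\<pi> + x) powr \<beta>) has_real_derivative \<beta> * (\<pi> + x) powr (\<beta> - 1)) (at x)"
    proof -
      have h: "((\<lambda>z. z powr \<beta>) has_real_derivative \<beta> * (\<pi> + x) powr (\<beta> - 1)) (at (\<pi> + x))"
        using has_real_derivative_powr[of "\<pi> + x" \<beta>] xp assms by simp
      have g: "((\<lambda>x. \<pi> + x) has_real_derivative 1) (at x)"
        by (auto intro!: derivative_eq_intros)
      show ?thesis using DERIV_chain2[OF h g] by simp
    qed
    have d2: "((\<lambda>x. x powr \<beta>) has_real_derivative \<beta> * x powr (\<beta> - 1)) (at x)"
      using has_real_derivative_powr[of x \<beta>] xp by simp
    have "(\<pi> + x) powr (\<beta> - 1) \<le> x powr (\<beta> - 1)"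
      using powr_mono2'[of "\<beta> - 1" x "\<pi> + x"] xp assms by simp
    then have "\<beta> * (\<pi> + x) powr (\<beta> - 1) - \<beta> * x powr (\<beta> - 1) \<le> 0"
      using assms by (simp add: mult_left_mono)
    then show "\<exists>y. ((\<lambda>x. (\<pi> + x) powr \<beta> - x powr \<beta>) has_real_derivative y) (at x) \<and> y \<le> 0"
      using DERIV_diff[OF d1 d2] by blast
  qed
  then show ?thesis by simp
qed

theorem mainTheorem6:
  fixes \<kappa> \<beta> lam \<mu> p \<pi> Q dl dh Rp :: real
  assumes "\<kappa> > 0" and "0 < dl" and "dl < Q" and "Q < dh"
    and "0 < p" and "p < 1" and "lam \<ge> 1" and "0 < \<mu>" and "\<mu> \<le> 1"
    and "0 < \<pi>" and "\<pi> < \<kappa>"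
    and "0 < \<beta>" and "\<beta> \<le> 1"
    and "Rp = \<kappa> * (Q - dh)"
  defines "U \<equiv> Useller \<kappa> \<beta> lam \<mu> p \<pi> Q dl dh Rp"
  defines "cond \<equiv> lam * wgt \<mu> p * (((\<kappa> - \<pi>) * (Q - dl)) powr \<beta>)
      \<ge> wgt \<mu> (1 - p) * ((((\<pi> - \<kappa>) * Q + \<kappa> * dh - \<pi> * dl) powr \<beta>)
                          - ((\<kappa> * (dh - Q)) powr \<beta>))"
  shows "(cond \<longrightarrow> (\<forall>q \<in> {0..Q - dl}. U q \<le> U 0))
       \<and> (\<not> cond \<longrightarrow> (\<forall>q \<in> {0..Q - dl}. U q \<le> U (Q - dl)))"
proof -
  define A where "A = wgt \<mu> (1 - p)"
  define B where "B = wgt \<mu> p"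
  define c where "c = \<kappa> * (dh - Q)"
  define M where "M = Q - dl"
  define D where "D = lam * B * (\<kappa> - \<pi>) powr \<beta>"
  have Apos: "A > 0" unfolding A_def wgt_def by simp
  have cpos: "c > 0" unfolding c_def using assms by simp
  have Mpos: "M > 0" unfolding M_def using assms by simp
  have Uform: "U q = A * (\<pi> * q + c) powr \<beta> - D * q powr \<beta>" if q: "0 \<le> q" "q \<le> M" for q
  proof -
    have e1: "Lpen \<kappa> (Q - q - dl) = 0" unfolding Lpen_def using q M_def by simp
    have e2: "\<pi> * q + 0 - Rp = \<pi> * q + c" using assms(14) c_def by (simp add: algebra_simps)
    have pos1: "\<pi> * q + c \<ge> 0" using q cpos assms by simp
    have e3: "\<pi> * q + Lpen \<kappa> (Q - q - dh) - Rp = - ((\<kappa> - \<pi>) * q)"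
      unfolding Lpen_def using q M_def assms by (auto simp: algebra_simps)
    have v3: "vval \<beta> lam (- ((\<kappa> - \<pi>) * q)) = - lam * ((\<kappa> - \<pi>) * q) powr \<beta>"
    proof (cases "q = 0")
      case False
      then have "(\<kappa> - \<pi>) * q > 0" using q assms by simp
      then show ?thesis unfolding vval_def by simp
    qed (simp add: vval_def)
    have "((\<kappa> - \<pi>) * q) powr \<beta> = (\<kappa> - \<pi>) powr \<beta> * q powr \<beta>"
      using q assms by (simp add: powr_mult)
    moreover have v1: "vval \<beta> lam (\<pi> * q + Lpen \<kappa> (Q - q - dl) - Rp) = (\<pi> * q + c) powr \<beta>"
    proof -
      have h: "\<pi> * q + Lpen \<kappa> (Q - q - dl) - Rp = \<pi> * q + c" using e1 e2 by simp
      show ?thesis unfolding h using pos1 by (simp add: vval_def)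
    qed
    ultimately show ?thesis
      unfolding U_def Useller_def using e3 v3
      by (simp add: A_def B_def D_def)
  qed
  have U0: "U 0 = A * c powr \<beta>" using Uform[of 0] Mpos assms by simp
  have key: "U q - U 0 = q powr \<beta> * (A * ((\<pi> + c / q) powr \<beta> - (c / q) powr \<beta>) - D)"
    if q: "0 < q" "q \<le> M" for q
  proof -
    have "\<pi> * q + c = q * (\<pi> + c / q)" using q by (simp add: field_simps)
    then have a: "(\<pi> * q + c) powr \<beta> = q powr \<beta> * (\<pi> + c / q) powr \<beta>"
      using q cpos assms by (simp add: powr_mult)
    have b: "c powr \<beta> = q powr \<beta> * (c / q) powr \<beta>"
      using q cpos by (simp add: powr_divide)
    show ?thesis using Uform[of q] q U0 a b by (simp add: algebra_simps)
  qed
  have quasi: "U q \<le> max (U 0) (U M)" if q: "0 \<le> q" "q \<le> M" for q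
  proof (cases "q = 0")
    case True then show ?thesis by simp
  next
    case False
    then have qp: "0 < q" using q by simp
    define u where "u = c / q"
    define v where "v = c / M"
    have vp: "0 < v" unfolding v_def using cpos Mpos by simp
    have vu: "v \<le> u" unfolding u_def v_def using q qp cpos Mpos
      by (simp add: frac_le)
    have G: "(\<pi> + u) powr \<beta> - u powr \<beta> \<le> (\<pi> + v) powr \<beta> - v powr \<beta>"
      using G_mono[OF vp vu] assms by simp
    define r where "r = A * ((\<pi> + u) powr \<beta> - u powr \<beta>) - D"
    define s where "s = A * ((\<pi> + v) powr \<beta> - v powr \<beta>) - D"
    have rs: "r \<le> s" unfolding r_def s_def using G Apos by simp
    have kq: "U q - U 0 = q powr \<beta> * r" using key[OF qp q(2)] u_def r_def by simp
    have kM: "U M - U 0 = M powr \<beta> * s" using key[OF Mpos order.refl] v_def s_def by simp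
    show ?thesis
    proof (cases "r \<le> 0")
      case True
      then have "q powr \<beta> * r \<le> 0" by (simp add: mult_nonneg_nonpos)
      then show ?thesis using kq by simp
    next
      case False
      have qM: "q powr \<beta> \<le> M powr \<beta>" using powr_mono2[of \<beta> q M] q assms by simp
      have "q powr \<beta> * r \<le> M powr \<beta> * r" using qM False by (simp add: mult_right_mono)
      also have "\<dots> \<le> M powr \<beta> * s" using rs by (simp add: mult_left_mono)
      finally show ?thesis using kq kM by simp
    qed
  qed
  have UM: "U M = A * ((\<pi> - \<kappa>) * Q + \<kappa> * dh - \<pi> * dl) powr \<beta>
       - lam * B * ((\<kappa> - \<pi>) * (Q - dl)) powr \<beta>"
  proof -
    have "\<pi> * M + c = (\<pi> - \<kappa>) * Q + \<kappa> * dh - \<pi> * dl" unfolding M_def c_def by (simp add: algebra_simps)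
    moreover have "D * M powr \<beta> = lam * B * ((\<kappa> - \<pi>) * (Q - dl)) powr \<beta>"
      unfolding D_def M_def using assms by (simp add: powr_mult)
    ultimately show ?thesis using Uform[of M] Mpos by simp
  qed
  have condiff: "cond \<longleftrightarrow> U M \<le> U 0"
    unfolding cond_def UM U0 A_def[symmetric] B_def[symmetric] c_def[symmetric]
    by (simp add: algebra_simps)
  show ?thesis
    using quasi condiff unfolding M_def[symmetric]
    by (metis atLeastAtMost_iff max.absorb1 max.absorb2 nle_le)
qed

end
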